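(* The radical $\mathcal{V}(D)$ of the form $\langle\cdot,\cdot\rangle$ is an ideal of $\mathcal{A}(D)$.
   Context: Let $G$ be a group generated by a conjugacy class $D$ of involutions such that for all $d,e\in D$ the order of $de$ is $1$, $2$ or $3$. Lines of the Fischer space on $D$ are triples $\{d,e,d^e\}$ with $d,e\in D$ non-commuting. $\mathcal{A}(D)$ is the $\mathbb{F}_2$-vector space with basis $D$ (finite subsets of $D$ under symmetric difference), with bilinear product determined by $d*e=d+e+f$ if $\{d,e,f\}$ is a line and $d*e=0$ otherwise. The bilinear form $\langle\cdot,\cdot\rangle$ on $\mathcal{A}(D)$ is determined by $\langle d,e\rangle=1$ if $d,e$ do not commute and $0$ otherwise; $\mathcal{V}(D)=\{u: \langle u,w\rangle=0\ \forall w\}$. *)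

theory Defs
  imports "HOL-Algebra.Algebra"
begin

definition fischer_class :: "('a, 'b) monoid_scheme \<Rightarrow> 'a set \<Rightarrow> bool" where
  "fischer_class G D \<longleftrightarrow>
     D \<subseteq> carrier G \<and>
     (\<exists>x\<in>carrier G. D = {g \<otimes>\<^bsub>G\<^esub> x \<otimes>\<^bsub>G\<^esub> inv\<^bsub>G\<^esub> g | g. g \<in> carrier G}) \<and>
     (\<forall>d\<in>D. d \<noteq> \<one>\<^bsub>G\<^esub> \<and> d \<otimes>\<^bsub>G\<^esub> d = \<one>\<^bsub>G\<^esub>) \<and>
     generate G D = carrier G \<and>
     (\<forall>d\<in>D. \<forall>e\<in>D. group.ord G (d \<otimes>\<^bsub>G\<^esub> e) \<in> {1, 2, 3})"

definition commute :: "('a, 'b) monoid_scheme \<Rightarrow> 'a \<Rightarrow> 'a \<Rightarrow> bool" where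
  "commute G d e \<longleftrightarrow> d \<otimes>\<^bsub>G\<^esub> e = e \<otimes>\<^bsub>G\<^esub> d"

definition conj :: "('a, 'b) monoid_scheme \<Rightarrow> 'a \<Rightarrow> 'a \<Rightarrow> 'a" where
  "conj G d e = inv\<^bsub>G\<^esub> e \<otimes>\<^bsub>G\<^esub> d \<otimes>\<^bsub>G\<^esub> e"

text \<open>Elements of A(D): finite subsets of D (F_2-vector space with basis D,
  addition = symmetric difference).\<close>
definition algA :: "'a set \<Rightarrow> 'a set set" where
  "algA D = {u. u \<subseteq> D \<and> finite u}"

definition symdiff :: "'a set \<Rightarrow> 'a set \<Rightarrow> 'a set" where
  "symdiff u w = (u - w) \<union> (w - u)"

text \<open>Product of basis elements: d*e = d+e+d^e if {d,e,d^e} is a line, 0 otherwise.\<close>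
definition basis_prod :: "('a, 'b) monoid_scheme \<Rightarrow> 'a \<Rightarrow> 'a \<Rightarrow> 'a set" where
  "basis_prod G d e = (if commute G d e then {} else {d, e, conj G d e})"

text \<open>Bilinear extension over F_2: x lies in u*w iff the number of pairs (d,e) in u \<times> w
  with x in d*e is odd.\<close>
definition algA_prod :: "('a, 'b) monoid_scheme \<Rightarrow> 'a set \<Rightarrow> 'a set \<Rightarrow> 'a set" where
  "algA_prod G u w = {x. odd (card {(d, e). d \<in> u \<and> e \<in> w \<and> x \<in> basis_prod G d e})}"

text \<open>Bilinear form with values in F_2 (True = 1): <u,w> is the parity of the number
  of non-commuting pairs in u \<times> w.\<close>
definition form :: "('a, 'b) monoid_scheme \<Rightarrow> 'a set \<Rightarrow> 'a set \<Rightarrow> bool" where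
  "form G u w \<longleftrightarrow> odd (card {(d, e). d \<in> u \<and> e \<in> w \<and> \<not> commute G d e})"

definition radical :: "('a, 'b) monoid_scheme \<Rightarrow> 'a set \<Rightarrow> 'a set set" where
  "radical G D = {u \<in> algA D. \<forall>w \<in> algA D. \<not> form G u w}"

definition is_ideal :: "('a, 'b) monoid_scheme \<Rightarrow> 'a set \<Rightarrow> 'a set set \<Rightarrow> bool" where
  "is_ideal G D I \<longleftrightarrow> I \<subseteq> algA D \<and> {} \<in> I \<and>
     (\<forall>u\<in>I. \<forall>w\<in>I. symdiff u w \<in> I) \<and>
     (\<forall>u\<in>I. \<forall>w\<in>algA D. algA_prod G u w \<in> I \<and> algA_prod G w u \<in> I)"

end

theory Submission
  imports Defs "HOL-Library.Z2"
begin



lemma bit_of_nat: "(of_nat n :: bit) = of_bool (odd n)"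
  by (induction n) auto

lemma card_pairs_bit:
  assumes "finite u" "finite w"
  shows "(of_nat (card {(d, e). d \<in> u \<and> e \<in> w \<and> P d e}) :: bit)
         = (\<Sum>d\<in>u. \<Sum>e\<in>w. of_bool (P d e))"
proof -
  have "{(d, e). d \<in> u \<and> e \<in> w \<and> P d e} = Sigma u (\<lambda>d. {e\<in>w. P d e})" by auto
  then have "card {(d, e). d \<in> u \<and> e \<in> w \<and> P d e} = (\<Sum>d\<in>u. card {e\<in>w. P d e})"
    using assms by simp
  moreover have "\<And>d. (of_nat (card {e\<in>w. P d e}) :: bit) = (\<Sum>e\<in>w. of_bool (P d e))"
    using assms by (simp add: Int_def conj_commute)
  ultimately show ?thesis by (simp add: of_nat_sum)
qed

lemma form_bit:
  assumes "finite u" "finite w"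
  shows "(of_bool (form G u w) :: bit) = (\<Sum>d\<in>u. \<Sum>e\<in>w. of_bool (\<not> commute G d e))"
  using card_pairs_bit[OF assms, of "\<lambda>d e. \<not> commute G d e"]
  by (simp add: form_def bit_of_nat)

lemma prod_bit:
  assumes "finite u" "finite w"
  shows "(of_bool (x \<in> algA_prod G u w) :: bit) = (\<Sum>d\<in>u. \<Sum>e\<in>w. of_bool (x \<in> basis_prod G d e))"
  using card_pairs_bit[OF assms, of "\<lambda>d e. x \<in> basis_prod G d e"]
  by (simp add: algA_prod_def bit_of_nat)



lemma swap3: "(\<Sum>z\<in>S. \<Sum>e\<in>w. \<Sum>y\<in>v. F z e y) = (\<Sum>e\<in>w. \<Sum>y\<in>v. \<Sum>z\<in>S. (F z e y :: 'c::comm_monoid_add))"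
proof -
  have "(\<Sum>z\<in>S. \<Sum>e\<in>w. \<Sum>y\<in>v. F z e y) = (\<Sum>e\<in>w. \<Sum>z\<in>S. \<Sum>y\<in>v. F z e y)" by (rule sum.swap)
  also have "\<dots> = (\<Sum>e\<in>w. \<Sum>y\<in>v. \<Sum>z\<in>S. F z e y)" by (intro sum.cong refl) (rule sum.swap)
  finally show ?thesis .
qed
lemma swap4: "(\<Sum>x\<in>S. \<Sum>y\<in>v. \<Sum>d\<in>u. \<Sum>e\<in>w. F x y d e) = (\<Sum>d\<in>u. \<Sum>e\<in>w. \<Sum>y\<in>v. \<Sum>x\<in>S. (F x y d e :: 'c::comm_monoid_add))"
proof -
  have "(\<Sum>x\<in>S. \<Sum>y\<in>v. \<Sum>d\<in>u. \<Sum>e\<in>w. F x y d e) = (\<Sum>y\<in>v. \<Sum>x\<in>S. \<Sum>d\<in>u. \<Sum>e\<in>w. F x y d e)"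
    by (rule sum.swap)
  also have "\<dots> = (\<Sum>y\<in>v. \<Sum>d\<in>u. \<Sum>e\<in>w. \<Sum>x\<in>S. F x y d e)"
    by (intro sum.cong refl) (rule swap3)
  also have "\<dots> = (\<Sum>d\<in>u. \<Sum>y\<in>v. \<Sum>e\<in>w. \<Sum>x\<in>S. F x y d e)"
    by (rule sum.swap)
  also have "\<dots> = (\<Sum>d\<in>u. \<Sum>e\<in>w. \<Sum>y\<in>v. \<Sum>x\<in>S. F x y d e)"
    by (intro sum.cong refl) (rule sum.swap)
  finally show ?thesis .
qed



abbreviation N :: "('a, 'b) monoid_scheme \<Rightarrow> 'a \<Rightarrow> 'a \<Rightarrow> bit" where
  "N G a b \<equiv> of_bool (\<not> commute G a b)"

lemma bp_finite: "finite (basis_prod G d e)"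
  by (simp add: basis_prod_def)

lemma prod_sub:
  "algA_prod G u w \<subseteq> (\<Union>d\<in>u. \<Union>e\<in>w. basis_prod G d e)"
proof
  fix x assume "x \<in> algA_prod G u w"
  then have "odd (card {(d, e). d \<in> u \<and> e \<in> w \<and> x \<in> basis_prod G d e})"
    by (simp add: algA_prod_def)
  then have "{(d, e). d \<in> u \<and> e \<in> w \<and> x \<in> basis_prod G d e} \<noteq> {}"
    by (metis card.empty odd_card_imp_not_empty)
  then show "x \<in> (\<Union>d\<in>u. \<Union>e\<in>w. basis_prod G d e)" by auto
qed

lemma prod_finite:
  assumes "finite u" "finite w" shows "finite (algA_prod G u w)"
  by (rule finite_subset[OF prod_sub]) (use assms bp_finite in auto)

lemma sum_ind_l: "finite S \<Longrightarrow> A \<subseteq> S \<Longrightarrow> (\<Sum>x\<in>S. of_bool (x \<in> A) * f x) = (\<Sum>x\<in>A. (f x :: 'c::comm_semiring_1))"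
  by (rule sum.mono_neutral_cong_right) auto
lemma sum_ind_r: "finite S \<Longrightarrow> A \<subseteq> S \<Longrightarrow> (\<Sum>x\<in>S. f x * of_bool (x \<in> A)) = (\<Sum>x\<in>A. (f x :: 'c::comm_semiring_1))"
  by (rule sum.mono_neutral_cong_right) auto

lemma left_expand:
  assumes "finite u" "finite w" "finite v"
  shows "(of_bool (form G (algA_prod G u w) v) :: bit)
     = (\<Sum>d\<in>u. \<Sum>e\<in>w. \<Sum>y\<in>v. \<Sum>x\<in>basis_prod G d e. N G x y)"
proof -
  define S where "S = (\<Union>d\<in>u. \<Union>e\<in>w. basis_prod G d e)"
  have fS: "finite S" unfolding S_def using assms bp_finite by auto
  have sub: "algA_prod G u w \<subseteq> S" unfolding S_def by (rule prod_sub)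
  have "(of_bool (form G (algA_prod G u w) v) :: bit)
       = (\<Sum>x\<in>algA_prod G u w. \<Sum>y\<in>v. N G x y)"
    by (rule form_bit) (use assms prod_finite in auto)
  also have "\<dots> = (\<Sum>x\<in>S. of_bool (x \<in> algA_prod G u w) * (\<Sum>y\<in>v. N G x y))"
    using fS sub by (simp only: sum_ind_l sum_ind_r)
  also have "\<dots> = (\<Sum>x\<in>S. (\<Sum>d\<in>u. \<Sum>e\<in>w. of_bool (x \<in> basis_prod G d e)) * (\<Sum>y\<in>v. N G x y))"
    by (simp only: prod_bit[OF assms(1,2)])
  also have "\<dots> = (\<Sum>x\<in>S. \<Sum>y\<in>v. \<Sum>d\<in>u. \<Sum>e\<in>w. of_bool (x \<in> basis_prod G d e) * N G x y)"
    by (simp only: sum_distrib_right sum_distrib_left)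
  also have "\<dots> = (\<Sum>d\<in>u. \<Sum>e\<in>w. \<Sum>y\<in>v. \<Sum>x\<in>S. of_bool (x \<in> basis_prod G d e) * N G x y)"
    by (rule swap4)
  also have "\<dots> = (\<Sum>d\<in>u. \<Sum>e\<in>w. \<Sum>y\<in>v. \<Sum>x\<in>basis_prod G d e. N G x y)"
  proof (rule sum.cong[OF refl], rule sum.cong[OF refl], rule sum.cong[OF refl])
    fix d e y assume "d \<in> u" "e \<in> w"
    then have "basis_prod G d e \<subseteq> S" unfolding S_def by auto
    then show "(\<Sum>x\<in>S. of_bool (x \<in> basis_prod G d e) * N G x y) = (\<Sum>x\<in>basis_prod G d e. N G x y)"
      using fS by (simp only: sum_ind_l sum_ind_r)
  qed
  finally show ?thesis .
qed

lemma right_expand: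
  assumes "finite u" "finite w" "finite v"
  shows "(of_bool (form G u (algA_prod G w v)) :: bit)
     = (\<Sum>d\<in>u. \<Sum>e\<in>w. \<Sum>y\<in>v. \<Sum>z\<in>basis_prod G e y. N G d z)"
proof -
  define S where "S = (\<Union>e\<in>w. \<Union>y\<in>v. basis_prod G e y)"
  have fS: "finite S" unfolding S_def using assms bp_finite by auto
  have sub: "algA_prod G w v \<subseteq> S" unfolding S_def by (rule prod_sub)
  have "(of_bool (form G u (algA_prod G w v)) :: bit)
       = (\<Sum>d\<in>u. \<Sum>z\<in>algA_prod G w v. N G d z)"
    by (rule form_bit) (use assms prod_finite in auto)
  also have "\<dots> = (\<Sum>d\<in>u. \<Sum>z\<in>S. N G d z * of_bool (z \<in> algA_prod G w v))"
    using fS sub by (simp only: sum_ind_l sum_ind_r)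
  also have "\<dots> = (\<Sum>d\<in>u. \<Sum>z\<in>S. N G d z * (\<Sum>e\<in>w. \<Sum>y\<in>v. of_bool (z \<in> basis_prod G e y)))"
    by (simp only: prod_bit[OF assms(2,3)])
  also have "\<dots> = (\<Sum>d\<in>u. \<Sum>z\<in>S. \<Sum>e\<in>w. \<Sum>y\<in>v. N G d z * of_bool (z \<in> basis_prod G e y))"
    by (simp only: sum_distrib_right sum_distrib_left)
  also have "\<dots> = (\<Sum>d\<in>u. \<Sum>e\<in>w. \<Sum>y\<in>v. \<Sum>z\<in>S. N G d z * of_bool (z \<in> basis_prod G e y))"
    by (rule sum.cong[OF refl], rule swap3)
  also have "\<dots> = (\<Sum>d\<in>u. \<Sum>e\<in>w. \<Sum>y\<in>v. \<Sum>z\<in>basis_prod G e y. N G d z)"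
  proof (rule sum.cong[OF refl], rule sum.cong[OF refl], rule sum.cong[OF refl])
    fix d e y assume "e \<in> w" "y \<in> v"
    then have "basis_prod G e y \<subseteq> S" unfolding S_def by auto
    then show "(\<Sum>z\<in>S. N G d z * of_bool (z \<in> basis_prod G e y)) = (\<Sum>z\<in>basis_prod G e y. N G d z)"
      using fS by (simp only: sum_ind_l sum_ind_r)
  qed
  finally show ?thesis .
qed



context group begin
lemma invol_inv: "c \<in> carrier G \<Longrightarrow> c \<otimes> c = \<one> \<Longrightarrow> inv c = c"
  using inv_equality by blast
lemma invol_cancel: "c \<in> carrier G \<Longrightarrow> c \<otimes> c = \<one> \<Longrightarrow> x \<in> carrier G \<Longrightarrow> c \<otimes> (c \<otimes> x) = x"
  by (metis l_one m_assoc)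

lemma conj_pres:
  assumes a: "a \<in> carrier G" and b: "b \<in> carrier G" and c: "c \<in> carrier G" and cc: "c \<otimes> c = \<one>"
    and ab: "commute G a b"
  shows "commute G (c \<otimes> a \<otimes> c) (c \<otimes> b \<otimes> c)"
proof -
  have 1: "(c \<otimes> a \<otimes> c) \<otimes> (c \<otimes> b \<otimes> c) = c \<otimes> (a \<otimes> b) \<otimes> c"
    using a b c cc by (simp add: m_assoc invol_cancel)
  have 2: "(c \<otimes> b \<otimes> c) \<otimes> (c \<otimes> a \<otimes> c) = c \<otimes> (b \<otimes> a) \<otimes> c"
    using a b c cc by (simp add: m_assoc invol_cancel)
  show ?thesis using 1 2 ab unfolding commute_def by simp
qed

lemma conj_conj: "a \<in> carrier G \<Longrightarrow> c \<in> carrier G \<Longrightarrow> c \<otimes> c = \<one> \<Longrightarrow> c \<otimes> (c \<otimes> a \<otimes> c) \<otimes> c = a"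
  by (simp add: m_assoc invol_cancel)

lemma commute_conj:
  assumes a: "a \<in> carrier G" and b: "b \<in> carrier G" and c: "c \<in> carrier G" and cc: "c \<otimes> c = \<one>"
  shows "commute G (c \<otimes> a \<otimes> c) b \<longleftrightarrow> commute G a (c \<otimes> b \<otimes> c)"
proof
  assume "commute G (c \<otimes> a \<otimes> c) b"
  from conj_pres[OF _ b c cc this] a c show "commute G a (c \<otimes> b \<otimes> c)"
    by (simp add: conj_conj cc)
next
  assume "commute G a (c \<otimes> b \<otimes> c)"
  from conj_pres[OF a _ c cc this] b c show "commute G (c \<otimes> a \<otimes> c) b"
    by (simp add: conj_conj cc)
qed

lemma braid_from_ord:
  assumes d: "d \<in> carrier G" and e: "e \<in> carrier G" and dd: "d \<otimes> d = \<one>" and ee: "e \<otimes> e = \<one>"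
    and o: "ord (d \<otimes> e) \<in> {1, 2, 3}" and nc: "\<not> commute G d e"
  shows "d \<otimes> e \<otimes> d = e \<otimes> d \<otimes> e"
proof -
  have de: "d \<otimes> e \<in> carrier G" using d e by simp
  have p: "(d \<otimes> e) [^] ord (d \<otimes> e) = \<one>" using de by simp
  have "ord (d \<otimes> e) = 3"
  proof (rule ccontr)
    assume "ord (d \<otimes> e) \<noteq> 3"
    with o have "ord (d \<otimes> e) = 1 \<or> ord (d \<otimes> e) = 2" by auto
    then show False
    proof
      assume "ord (d \<otimes> e) = 1"
      with p de have "d \<otimes> e = \<one>" by simp
      then have "d \<otimes> e = d \<otimes> d" using dd by simp
      then have "e = d" using d e by simp
      then show False using nc by (simp add: commute_def)
    next
      assume "ord (d \<otimes> e) = 2"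
      with p de have 1: "(d \<otimes> e) \<otimes> (d \<otimes> e) = \<one>" by (simp add: numeral_2_eq_2)
      have 2: "(d \<otimes> e) \<otimes> (e \<otimes> d) = \<one>" using d e dd ee by (simp add: m_assoc invol_cancel)
      have "(d \<otimes> e) \<otimes> (d \<otimes> e) = (d \<otimes> e) \<otimes> (e \<otimes> d)" using 1 2 by simp
      then have "d \<otimes> e = e \<otimes> d" using d e l_cancel[of "d \<otimes> e" "d \<otimes> e" "e \<otimes> d"] by simp
      then show False using nc by (simp add: commute_def)
    qed
  qed
  with p de have "(d \<otimes> e) \<otimes> (d \<otimes> e) \<otimes> (d \<otimes> e) = \<one>" by (simp add: numeral_3_eq_3)
  then have 1: "(d \<otimes> e \<otimes> d) \<otimes> (e \<otimes> d \<otimes> e) = \<one>" using d e by (simp add: m_assoc)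
  have 2: "(e \<otimes> d \<otimes> e) \<otimes> (e \<otimes> d \<otimes> e) = \<one>" using d e dd ee by (simp add: m_assoc invol_cancel)
  have "(d \<otimes> e \<otimes> d) \<otimes> (e \<otimes> d \<otimes> e) = (e \<otimes> d \<otimes> e) \<otimes> (e \<otimes> d \<otimes> e)" using 1 2 by simp
  then show ?thesis using d e r_cancel[of "e \<otimes> d \<otimes> e" "d \<otimes> e \<otimes> d" "e \<otimes> d \<otimes> e"] by simp
qed
end



lemma bit_add_self [simp]: "(x::bit) + x = 0"
  by (cases x) simp_all

lemma commute_sym: "commute G a b \<longleftrightarrow> commute G b a"
  by (auto simp: commute_def)

context group begin

lemma comm_conj_eq: "a \<in> carrier G \<Longrightarrow> b \<in> carrier G \<Longrightarrow> a \<otimes> a = \<one> \<Longrightarrow> commute G a b \<Longrightarrow> a \<otimes> b \<otimes> a = b"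
  unfolding commute_def by (metis invol_cancel m_assoc)

lemma conj_ne:
  assumes d: "d \<in> carrier G" and e: "e \<in> carrier G" and ee: "e \<otimes> e = \<one>" and nc: "\<not> commute G d e"
  shows "e \<otimes> d \<otimes> e \<noteq> d" "e \<otimes> d \<otimes> e \<noteq> e" "d \<noteq> e"
proof -
  show "d \<noteq> e" using nc by (auto simp: commute_def)
  show "e \<otimes> d \<otimes> e \<noteq> d"
  proof
    assume h: "e \<otimes> d \<otimes> e = d"
    have "e \<otimes> (e \<otimes> d \<otimes> e) = d \<otimes> e" using d e ee by (simp add: m_assoc invol_cancel)
    then have "e \<otimes> d = d \<otimes> e" using h by simp
    then show False using nc by (simp add: commute_def)
  qed
  show "e \<otimes> d \<otimes> e \<noteq> e"
  proof
    assume h: "e \<otimes> d \<otimes> e = e"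
    have "e \<otimes> (e \<otimes> d \<otimes> e) \<otimes> e = d" using d e ee by (rule conj_conj)
    then have "d = e" using h e ee by (simp add: invol_cancel)
    then show False using nc by (simp add: commute_def)
  qed
qed

end

locale fischer = group G for G (structure) +
  fixes D
  assumes fc: "fischer_class G D"
begin

lemma D_carrier: "d \<in> D \<Longrightarrow> d \<in> carrier G"
  using fc by (auto simp: fischer_class_def)

lemma D_invol: "d \<in> D \<Longrightarrow> d \<otimes> d = \<one>"
  using fc by (auto simp: fischer_class_def)

lemma D_ord: "d \<in> D \<Longrightarrow> e \<in> D \<Longrightarrow> ord (d \<otimes> e) \<in> {1, 2, 3}"
  using fc unfolding fischer_class_def by blast

lemma conj_eq: "d \<in> D \<Longrightarrow> e \<in> D \<Longrightarrow> conj G d e = e \<otimes> d \<otimes> e"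
  by (simp add: conj_def invol_inv D_carrier D_invol)

lemma braid:
  assumes d: "d \<in> D" and e: "e \<in> D" and nc: "\<not> commute G d e"
  shows "d \<otimes> e \<otimes> d = e \<otimes> d \<otimes> e"
  using braid_from_ord[OF D_carrier[OF d] D_carrier[OF e] D_invol[OF d] D_invol[OF e] D_ord[OF d e] nc] .

lemma conj_in_D:
  assumes d: "d \<in> D" and e: "e \<in> D" shows "conj G d e \<in> D"
proof -
  obtain x where x: "x \<in> carrier G" and Dx: "D = {g \<otimes> x \<otimes> inv g | g. g \<in> carrier G}"
    using fc by (auto simp: fischer_class_def)
  from d Dx obtain g where g: "g \<in> carrier G" and dg: "d = g \<otimes> x \<otimes> inv g" by auto
  have ec: "e \<in> carrier G" using e D_carrier by simp
  have "conj G d e = (inv e \<otimes> g) \<otimes> x \<otimes> inv (inv e \<otimes> g)"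
    using g x ec by (simp add: conj_def dg m_assoc inv_mult_group)
  moreover have "inv e \<otimes> g \<in> carrier G" using g ec by simp
  ultimately show ?thesis using Dx by auto
qed

lemma bp_sub: "d \<in> D \<Longrightarrow> e \<in> D \<Longrightarrow> basis_prod G d e \<subseteq> D"
  by (auto simp: basis_prod_def conj_in_D)

lemma bp_sym: "d \<in> D \<Longrightarrow> e \<in> D \<Longrightarrow> basis_prod G d e = basis_prod G e d"
  using braid[of d e] by (auto simp: basis_prod_def conj_eq commute_sym)

lemma basis_assoc:
  assumes d: "d \<in> D" and e: "e \<in> D" and y: "y \<in> D"
  shows "(\<Sum>x\<in>basis_prod G d e. N G x y) = (\<Sum>z\<in>basis_prod G e y. N G d z)"
proof -
  have dc: "d \<in> carrier G" and ec: "e \<in> carrier G" and yc: "y \<in> carrier G"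
    using d e y D_carrier by auto
  have dd: "d \<otimes> d = \<one>" and ee: "e \<otimes> e = \<one>" and yy: "y \<otimes> y = \<one>"
    using d e y D_invol by auto
  have sum3: "(\<Sum>x\<in>basis_prod G a b. h x) = h a + h b + h (b \<otimes> a \<otimes> b)"
    if "a \<in> D" "b \<in> D" "\<not> commute G a b" for a b and h :: "'a \<Rightarrow> bit"
  proof -
    have ne: "b \<otimes> a \<otimes> b \<noteq> a" "b \<otimes> a \<otimes> b \<noteq> b" "a \<noteq> b"
      using conj_ne[of a b] that D_carrier D_invol by auto
    have "basis_prod G a b = {a, b, b \<otimes> a \<otimes> b}"
      using that by (simp add: basis_prod_def conj_eq)
    moreover have "(\<Sum>x\<in>{a, b, b \<otimes> a \<otimes> b}. h x) = h a + (\<Sum>x\<in>{b, b \<otimes> a \<otimes> b}. h x)"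
      by (rule sum.insert) (use ne in auto)
    moreover have "(\<Sum>x\<in>{b, b \<otimes> a \<otimes> b}. h x) = h b + (\<Sum>x\<in>{b \<otimes> a \<otimes> b}. h x)"
      by (rule sum.insert) (use ne in auto)
    ultimately show ?thesis by (metis add.assoc add_0_right sum.empty sum.insert finite.emptyI empty_iff)
  qed
  have key: "commute G (e \<otimes> d \<otimes> e) y \<longleftrightarrow> commute G d (e \<otimes> y \<otimes> e)"
    by (rule commute_conj[OF dc yc ec ee])
  show ?thesis
  proof (cases "commute G d e")
    case de: True
    show ?thesis
    proof (cases "commute G e y")
      case True
      then show ?thesis using de by (simp add: basis_prod_def)
    next
      case ey: False
      have "e \<otimes> d \<otimes> e = d" using comm_conj_eq[OF ec dc ee] de by (simp add: commute_sym)
      then have k: "commute G d y \<longleftrightarrow> commute G d (y \<otimes> e \<otimes> y)"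
        using key braid[OF e y ey] by simp
      have "(\<Sum>z\<in>basis_prod G e y. N G d z) = N G d e + N G d y + N G d (y \<otimes> e \<otimes> y)"
        by (rule sum3[OF e y ey])
      also have "\<dots> = 0" using k de by simp
      finally show ?thesis using de by (simp add: basis_prod_def)
    qed
  next
    case de: False
    have L: "(\<Sum>x\<in>basis_prod G d e. N G x y) = N G d y + N G e y + N G (e \<otimes> d \<otimes> e) y"
      by (rule sum3[OF d e de])
    show ?thesis
    proof (cases "commute G e y")
      case ey: True
      have "e \<otimes> y \<otimes> e = y" using comm_conj_eq[OF ec yc ee ey] .
      then have "N G (e \<otimes> d \<otimes> e) y = N G d y" using key by simp
      then show ?thesis using L ey by (simp add: basis_prod_def)
    next
      case ey: False
      have R: "(\<Sum>z\<in>basis_prod G e y. N G d z) = N G d e + N G d y + N G d (y \<otimes> e \<otimes> y)"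
        by (rule sum3[OF e y ey])
      have "N G (e \<otimes> d \<otimes> e) y = N G d (y \<otimes> e \<otimes> y)" using key braid[OF e y ey] by simp
      then show ?thesis using L R de ey by (simp add: commute_sym[of G e d] commute_sym[of G e y])
    qed
  qed
qed

end



lemma of_bool_bit_eq: "((of_bool P :: bit) = of_bool Q) \<longleftrightarrow> (P = Q)"
  by (cases P; cases Q) simp_all

lemma sum_symdiff_gen:
  assumes "finite u" "finite w"
  shows "sum f u + sum f w = sum f (symdiff u w) + (sum f (u \<inter> w) + (sum f (u \<inter> w) :: 'c::comm_monoid_add))"
proof -
  have a: "sum f u = sum f (u - w) + sum f (u \<inter> w)"
    using assms sum.union_disjoint[of "u - w" "u \<inter> w" f] by (simp add: Un_Diff_Int) blast
  have b: "sum f w = sum f (w - u) + sum f (u \<inter> w)"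
  proof -
    have "w = (w - u) \<union> (u \<inter> w)" by blast
    then have "sum f w = sum f ((w - u) \<union> (u \<inter> w))" by simp
    also have "\<dots> = sum f (w - u) + sum f (u \<inter> w)"
      by (rule sum.union_disjoint) (use assms in auto)
    finally show ?thesis .
  qed
  have c: "sum f (symdiff u w) = sum f (u - w) + sum f (w - u)"
    unfolding symdiff_def by (rule sum.union_disjoint) (use assms in auto)
  show ?thesis
    unfolding a b c by (simp only: add.assoc add.left_commute)
qed
lemma sum_symdiff:
  assumes "finite u" "finite w"
  shows "(\<Sum>x\<in>symdiff u w. f x) = (\<Sum>x\<in>u. f x) + (\<Sum>x\<in>w. (f x :: bit))"
  using sum_symdiff_gen[OF assms, of f] by (simp only: bit_add_self add_0_right)

context fischer begin

lemma form_assoc: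
  assumes u: "u \<in> algA D" and w: "w \<in> algA D" and v: "v \<in> algA D"
  shows "form G (algA_prod G u w) v = form G u (algA_prod G w v)"
proof -
  have f: "finite u" "finite w" "finite v" using u w v by (auto simp: algA_def)
  have "(of_bool (form G (algA_prod G u w) v) :: bit) = of_bool (form G u (algA_prod G w v))"
    unfolding left_expand[OF f] right_expand[OF f]
  proof (rule sum.cong[OF refl], rule sum.cong[OF refl], rule sum.cong[OF refl])
    fix d e y assume "d \<in> u" "e \<in> w" "y \<in> v"
    then have "d \<in> D" "e \<in> D" "y \<in> D" using u w v by (auto simp: algA_def)
    then show "(\<Sum>x\<in>basis_prod G d e. N G x y) = (\<Sum>z\<in>basis_prod G e y. N G d z)"
      by (rule basis_assoc)
  qed
  then show ?thesis by (simp only: of_bool_bit_eq)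
qed

lemma prod_algA:
  assumes u: "u \<in> algA D" and w: "w \<in> algA D"
  shows "algA_prod G u w \<in> algA D"
proof -
  have "algA_prod G u w \<subseteq> D"
    using prod_sub[of G u w] bp_sub u w by (fastforce simp: algA_def)
  moreover have "finite (algA_prod G u w)" using u w by (intro prod_finite) (auto simp: algA_def)
  ultimately show ?thesis by (simp add: algA_def)
qed

lemma prod_comm:
  assumes u: "u \<in> algA D" and w: "w \<in> algA D"
  shows "algA_prod G u w = algA_prod G w u"
proof -
  have f: "finite u" "finite w" using u w by (auto simp: algA_def)
  have "(of_bool (x \<in> algA_prod G u w) :: bit) = of_bool (x \<in> algA_prod G w u)" for x
  proof -
    have "(of_bool (x \<in> algA_prod G u w) :: bit) = (\<Sum>d\<in>u. \<Sum>e\<in>w. of_bool (x \<in> basis_prod G d e))"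
      by (rule prod_bit[OF f])
    also have "\<dots> = (\<Sum>e\<in>w. \<Sum>d\<in>u. of_bool (x \<in> basis_prod G d e))" by (rule sum.swap)
    also have "\<dots> = (\<Sum>e\<in>w. \<Sum>d\<in>u. of_bool (x \<in> basis_prod G e d))"
    proof (rule sum.cong[OF refl], rule sum.cong[OF refl])
      fix e d assume "e \<in> w" "d \<in> u"
      then have "d \<in> D" "e \<in> D" using u w by (auto simp: algA_def)
      then show "(of_bool (x \<in> basis_prod G d e) :: bit) = of_bool (x \<in> basis_prod G e d)"
        using bp_sym by simp
    qed
    also have "\<dots> = of_bool (x \<in> algA_prod G w u)"
      by (rule prod_bit[OF f(2,1), symmetric])
    finally show ?thesis .
  qed
  then show ?thesis by (auto simp only: of_bool_bit_eq)
qed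

lemma radical_ideal: "is_ideal G D (radical G D)"
  unfolding is_ideal_def
proof (intro conjI ballI)
  show "radical G D \<subseteq> algA D" by (auto simp: radical_def)
  show "{} \<in> radical G D" by (auto simp: radical_def algA_def form_def)
next
  fix u w assume u: "u \<in> radical G D" and w: "w \<in> radical G D"
  then have ua: "u \<in> algA D" and wa: "w \<in> algA D" by (auto simp: radical_def)
  have sa: "symdiff u w \<in> algA D" using ua wa by (auto simp: algA_def symdiff_def)
  show "symdiff u w \<in> radical G D"
    unfolding radical_def
  proof (intro CollectI conjI ballI sa)
    fix v assume v: "v \<in> algA D"
    have f: "finite u" "finite w" "finite v" using ua wa v by (auto simp: algA_def)
    have fs: "finite (symdiff u w)" using f by (simp add: symdiff_def)
    have "(of_bool (form G (symdiff u w) v) :: bit) = of_bool (form G u v) + of_bool (form G w v)"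
      unfolding form_bit[OF fs f(3)] form_bit[OF f(1,3)] form_bit[OF f(2,3)]
      by (rule sum_symdiff[OF f(1,2)])
    moreover have "\<not> form G u v" "\<not> form G w v" using u w v by (auto simp: radical_def)
    ultimately show "\<not> form G (symdiff u w) v" by simp
  qed
next
  fix u w assume u: "u \<in> radical G D" and w: "w \<in> algA D"
  then have ua: "u \<in> algA D" by (auto simp: radical_def)
  have r: "algA_prod G u w \<in> radical G D"
    unfolding radical_def
  proof (intro CollectI conjI ballI prod_algA ua w)
    fix v assume v: "v \<in> algA D"
    have "form G (algA_prod G u w) v = form G u (algA_prod G w v)"
      by (rule form_assoc[OF ua w v])
    moreover have "algA_prod G w v \<in> algA D" by (rule prod_algA[OF w v])
    ultimately show "\<not> form G (algA_prod G u w) v" using u by (auto simp: radical_def)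
  qed
  then show "algA_prod G u w \<in> radical G D" .
  show "algA_prod G w u \<in> radical G D" using r prod_comm[OF ua w] by simp
qed

end

theorem corollary2p2:
  fixes G :: "('a, 'b) monoid_scheme" and D :: "'a set"
  assumes "group G"
    and "fischer_class G D"
  shows "is_ideal G D (radical G D)"
proof -
  interpret fischer G D using assms by (simp add: fischer_def fischer_axioms_def)
  show ?thesis by (rule radical_ideal)
qed


end
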